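(* Let $N\ge1$ and let $\mathcal{A}=\prod_{n=1}^N\mathcal{A}_n$ be a finite set of reservation vectors. Let $C(a,b)=C_R(a)+C_V(a,b)+C_T(a,b)$ be the total cost of reservation $a\in\mathcal{A}$ under job request vector $b$, and assume there is $\Theta>0$ such that $|C_R(a)|\le\Theta$, $|C_T(a,b)|\le\Theta$ and $|C_V(a,b)|\le\Theta$ for all reservations $a\in\mathcal{A}$ and all job request vectors $b$. Fix a horizon $T>0$, take $\eta=\sqrt{\log|\mathcal{A}|/T}$, and let $b^1,\dots,b^T$ be any sequence of job request vectors. Run the exponentially weighted strategy: at each $t=1,\dots,T$ the reservation $A^t$ is drawn at random (independently given the past draws) from the distribution $P^t$ on $\mathcal{A}$ given by $$w^t(a)=\exp\Big\{-\eta\sum_{s=1}^{t-1}C(a,b^s)\Big\},\qquad P^t_a=\frac{w^t(a)}{\sum_{a'\in\mathcal{A}}w^t(a')}.$$ Define the regret $R_T=\sum_{t=1}^TC(A^t,b^t)-\min_{a\in\mathcal{A}}\sum_{t=1}^TC(a,b^t)$. Then for any $0<\delta<1$, with probability at least $1-\delta$, $$R_T\le\Big(\frac{9\Theta^2}{8}+1\Big)\sqrt{T\log|\mathcal{A}|}+3\Theta\sqrt{\tfrac12\log(\delta^{-1})\,T}.$$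
   Context: Setting: a network of $N$ servers; at each time slot $t$ an administrator chooses a reservation vector $a=(a_1,\dots,a_N)\in\mathcal{A}$ (with $\mathcal{A}_n$ the finite set of possible reservation levels at server $n$) before observing the job requests $b=(b_1,\dots,b_N)$; jobs may then be transferred between servers. With positive functions $f^R_n,f^V_n,f^T_{n,m}$, the costs are $C_R(a)=\sum_{n}f^R_n(a_n)$, $C_V(a,b)=\sum_n f^V_n\big(b_n-a_n-\sum_{m}\delta_{n,m}\big)$, $C_T(a,b)=\sum_n\sum_{m\ne n}f^T_{n,m}(\delta_{n,m})$, where the transfer amounts $\delta_{n,m}=\delta_{n,m}(a,b)$ are an optimal solution of $\min\sum_n\big(\sum_{m\ne n}f^T_{n,m}(\delta_{n,m})+f^V_n(b_n-a_n-\sum_{m\ne n}\delta_{n,m})\big)$ subject to $\delta_{n,m}\le\min\{(b_n-a_n)^+,(a_m-b_m)^+\}$ for all $n\ne m$. The probability is over the random draws $A^1,\dots,A^T$. *)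

theory Defs
  imports "HOL-Analysis.Analysis"
begin

text \<open>Servers are indexed by 0..<N. Reservation and request vectors are functions nat => real
(only their values on 0..<N matter). A transfer plan is d :: nat => nat => real, d n m being the
amount moved from server n to server m.\<close>

type_synonym vec = "nat \<Rightarrow> real"
type_synonym transfer = "nat \<Rightarrow> nat \<Rightarrow> real"

definition res_set :: "nat \<Rightarrow> (nat \<Rightarrow> real set) \<Rightarrow> vec set" where
  "res_set N Alev = PiE {..<N} Alev"

definition cost_R :: "nat \<Rightarrow> (nat \<Rightarrow> real \<Rightarrow> real) \<Rightarrow> vec \<Rightarrow> real" where
  "cost_R N fR a = (\<Sum>n<N. fR n (a n))"

definition cost_V_of :: "nat \<Rightarrow> (nat \<Rightarrow> real \<Rightarrow> real) \<Rightarrow> vec \<Rightarrow> vec \<Rightarrow> transfer \<Rightarrow> real" where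
  "cost_V_of N fV a b d = (\<Sum>n<N. fV n (b n - a n - (\<Sum>m\<in>{..<N} - {n}. d n m)))"

definition cost_T_of :: "nat \<Rightarrow> (nat \<Rightarrow> nat \<Rightarrow> real \<Rightarrow> real) \<Rightarrow> transfer \<Rightarrow> real" where
  "cost_T_of N fT d = (\<Sum>n<N. \<Sum>m\<in>{..<N} - {n}. fT n m (d n m))"

definition feasible_transfer :: "nat \<Rightarrow> vec \<Rightarrow> vec \<Rightarrow> transfer \<Rightarrow> bool" where
  "feasible_transfer N a b d \<longleftrightarrow>
     (\<forall>n<N. \<forall>m<N. n \<noteq> m \<longrightarrow> d n m \<le> min (max (b n - a n) 0) (max (a m - b m) 0))"

definition optimal_transfer ::
  "nat \<Rightarrow> (nat \<Rightarrow> real \<Rightarrow> real) \<Rightarrow> (nat \<Rightarrow> nat \<Rightarrow> real \<Rightarrow> real) \<Rightarrow> vec set \<Rightarrow> vec set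
     \<Rightarrow> (vec \<Rightarrow> vec \<Rightarrow> transfer) \<Rightarrow> bool" where
  "optimal_transfer N fV fT AA B tr \<longleftrightarrow>
     (\<forall>a\<in>AA. \<forall>b\<in>B. feasible_transfer N a b (tr a b) \<and>
        (\<forall>d. feasible_transfer N a b d \<longrightarrow>
           cost_T_of N fT (tr a b) + cost_V_of N fV a b (tr a b)
             \<le> cost_T_of N fT d + cost_V_of N fV a b d))"

definition cost_V :: "nat \<Rightarrow> (nat \<Rightarrow> real \<Rightarrow> real) \<Rightarrow> (vec \<Rightarrow> vec \<Rightarrow> transfer) \<Rightarrow> vec \<Rightarrow> vec \<Rightarrow> real" where
  "cost_V N fV tr a b = cost_V_of N fV a b (tr a b)"

definition cost_T :: "nat \<Rightarrow> (nat \<Rightarrow> nat \<Rightarrow> real \<Rightarrow> real) \<Rightarrow> (vec \<Rightarrow> vec \<Rightarrow> transfer) \<Rightarrow> vec \<Rightarrow> vec \<Rightarrow> real" where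
  "cost_T N fT tr a b = cost_T_of N fT (tr a b)"

definition ew_weight :: "real \<Rightarrow> (vec \<Rightarrow> vec \<Rightarrow> real) \<Rightarrow> (nat \<Rightarrow> vec) \<Rightarrow> nat \<Rightarrow> vec \<Rightarrow> real" where
  "ew_weight eta C bs t a = exp (- eta * (\<Sum>s\<in>{1..<t}. C a (bs s)))"

definition ew_prob :: "vec set \<Rightarrow> real \<Rightarrow> (vec \<Rightarrow> vec \<Rightarrow> real) \<Rightarrow> (nat \<Rightarrow> vec) \<Rightarrow> nat \<Rightarrow> vec \<Rightarrow> real" where
  "ew_prob AA eta C bs t a = ew_weight eta C bs t a / (\<Sum>a'\<in>AA. ew_weight eta C bs t a')"

text \<open>Probability, under the law of the draws A^1..A^T (A^t ~ P^t, each drawn independently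
given the past; since P^t does not depend on past draws this is the product law), of an event
E on draw sequences omega in PiE {1..T} (\<lambda>_. AA).\<close>
definition ew_event_prob ::
  "vec set \<Rightarrow> real \<Rightarrow> (vec \<Rightarrow> vec \<Rightarrow> real) \<Rightarrow> (nat \<Rightarrow> vec) \<Rightarrow> nat \<Rightarrow> ((nat \<Rightarrow> vec) \<Rightarrow> bool) \<Rightarrow> real" where
  "ew_event_prob AA eta C bs T E =
     (\<Sum>\<omega>\<in>{\<omega>\<in>PiE {1..T} (\<lambda>_. AA). E \<omega>}. \<Prod>t\<in>{1..T}. ew_prob AA eta C bs t (\<omega> t))"

definition regret :: "vec set \<Rightarrow> (vec \<Rightarrow> vec \<Rightarrow> real) \<Rightarrow> (nat \<Rightarrow> vec) \<Rightarrow> nat \<Rightarrow> (nat \<Rightarrow> vec) \<Rightarrow> real" where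
  "regret AA C bs T \<omega> =
     (\<Sum>t\<in>{1..T}. C (\<omega> t) (bs t)) - Min ((\<lambda>a. \<Sum>t\<in>{1..T}. C a (bs t)) ` AA)"

end

theory Submission imports Defs "HOL-Probability.Probability" begin
lemma hoeff_fin:
  fixes A :: "'a set" and P x :: "'a \<Rightarrow> real" and R \<eta> :: real
  assumes fin: "finite A" and P0: "\<And>a. a \<in> A \<Longrightarrow> 0 \<le> P a" and P1: "sum P A = 1"
    and xb: "\<And>a. a \<in> A \<Longrightarrow> 0 \<le> x a \<and> x a \<le> R" and eta: "\<eta> \<ge> 0"
  shows "(\<Sum>a\<in>A. P a * exp (- \<eta> * x a)) \<le> exp (- \<eta> * (\<Sum>a\<in>A. P a * x a) + \<eta>\<^sup>2 * R\<^sup>2 / 8)"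
proof -
  have "A \<noteq> {}" using P1 by auto
  then obtain a0 where "a0 \<in> A" by auto
  then have R0: "R \<ge> 0" using xb by force
  show ?thesis
  proof (cases "R = 0")
    case True
    then have "\<And>a. a \<in> A \<Longrightarrow> x a = 0" using xb by force
    then show ?thesis using P1 True by simp
  next
    case False
    with R0 have Rp: "R > 0" by simp
    define h where "h = \<eta> * R"
    have h0: "h \<ge> 0" using eta Rp h_def by simp
    define q where "q = (\<Sum>a\<in>A. P a * x a) / R"
    have conv: "exp (- \<eta> * x a) \<le> (1 - x a / R) + x a / R * exp (- h)" if a: "a \<in> A" for a
    proof -
      have t0: "0 \<le> x a / R" "x a / R \<le> 1" using xb[OF a] Rp by auto
      have "exp ((1 - x a / R) *\<^sub>R 0 + (x a / R) *\<^sub>R (- h)) \<le> (1 - x a / R) * exp 0 + (x a / R) * exp (- h)"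
        by (rule convex_onD[OF convex_on_exp[of 1, simplified] t0]) auto
      moreover have "(1 - x a / R) *\<^sub>R 0 + (x a / R) *\<^sub>R (- h) = - \<eta> * x a"
        using Rp by (simp add: h_def field_simps)
      ultimately show ?thesis by simp
    qed
    have "(\<Sum>a\<in>A. P a * exp (- \<eta> * x a)) \<le> (\<Sum>a\<in>A. P a * ((1 - x a / R) + x a / R * exp (- h)))"
      by (intro sum_mono mult_left_mono conv P0)
    also have "\<dots> = (\<Sum>a\<in>A. P a) - (\<Sum>a\<in>A. P a * x a) / R + (\<Sum>a\<in>A. P a * x a) / R * exp (- h)"
    proof -
      have "(\<Sum>a\<in>A. P a * ((1 - x a / R) + x a / R * exp (- h))) = (\<Sum>a\<in>A. P a - (P a * x a) / R + (P a * x a) / R * exp (- h))"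
        by (intro sum.cong) (auto simp: algebra_simps)
      also have "\<dots> = (\<Sum>a\<in>A. P a) - (\<Sum>a\<in>A. P a * x a) / R + (\<Sum>a\<in>A. P a * x a) / R * exp (- h)"
        by (simp add: sum.distrib sum_subtractf sum_divide_distrib[symmetric] sum_distrib_right[symmetric])
      finally show ?thesis .
    qed
    also have "\<dots> = 1 - q + q * exp (- h)" using P1 q_def by simp
    finally have L: "(\<Sum>a\<in>A. P a * exp (- \<eta> * x a)) \<le> 1 - q + q * exp (- h)" .
    have "(\<Sum>a\<in>A. P a * x a) \<le> (\<Sum>a\<in>A. P a * R)"
      by (intro sum_mono mult_left_mono) (use xb P0 in auto)
    also have "\<dots> = R" using P1 by (simp add: sum_distrib_right[symmetric])
    finally have q1: "q \<le> 1" using Rp q_def by simp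
    have "(\<Sum>a\<in>A. P a * x a) \<ge> 0" by (intro sum_nonneg) (use xb P0 in auto)
    then have q0: "q \<ge> 0" using Rp q_def by simp
    have aux: "- h * (1 - q) + ln (1 + (1 - q) * (exp h - 1)) \<le> h\<^sup>2 / 8"
      using Hoeffdings_lemma_aux[of h "1 - q"] h0 q1 by simp
    have pos: "1 + (1 - q) * (exp h - 1) > 0"
    proof -
      have "exp h - 1 \<ge> 0" using h0 by simp
      then have "(1 - q) * (exp h - 1) \<ge> 0" using q1 by simp
      then show ?thesis by simp
    qed
    have "1 + (1 - q) * (exp h - 1) = exp (ln (1 + (1 - q) * (exp h - 1)))" using pos by simp
    also have "\<dots> \<le> exp (h\<^sup>2 / 8 + h * (1 - q))" using aux by simp
    finally have E: "1 + (1 - q) * (exp h - 1) \<le> exp (h\<^sup>2 / 8 + h * (1 - q))" .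
    have "1 - q + q * exp (- h) = exp (- h) * (1 + (1 - q) * (exp h - 1))"
      by (simp add: algebra_simps exp_minus_inverse)
    also have "\<dots> \<le> exp (- h) * exp (h\<^sup>2 / 8 + h * (1 - q))" using E by simp
    also have "\<dots> = exp (h\<^sup>2 / 8 - h * q)" by (simp add: exp_add[symmetric] algebra_simps)
    also have "h\<^sup>2 / 8 - h * q = - \<eta> * (\<Sum>a\<in>A. P a * x a) + \<eta>\<^sup>2 * R\<^sup>2 / 8"
      using Rp by (simp add: h_def q_def power2_eq_square field_simps)
    finally show ?thesis using L by linarith
  qed
qed

lemma hedge:
  fixes A :: "vec set" and C :: "vec \<Rightarrow> vec \<Rightarrow> real" and bs :: "nat \<Rightarrow> vec" and R \<eta> :: real and T :: nat
  assumes fin: "finite A" and ne: "A \<noteq> {}"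
    and cb: "\<And>t a. t \<in> {1..T} \<Longrightarrow> a \<in> A \<Longrightarrow> 0 \<le> C a (bs t) \<and> C a (bs t) \<le> R"
    and eta: "\<eta> > 0"
  shows "(\<Sum>t\<in>{1..T}. \<Sum>a\<in>A. ew_prob A \<eta> C bs t a * C a (bs t))
           - Min ((\<lambda>a. \<Sum>t\<in>{1..T}. C a (bs t)) ` A) \<le> ln (card A) / \<eta> + \<eta> * T * R\<^sup>2 / 8"
proof -
  define w where "w = ew_weight \<eta> C bs"
  define W where "W = (\<lambda>t. \<Sum>a\<in>A. w t a)"
  define P where "P = ew_prob A \<eta> C bs"
  define E where "E = (\<lambda>t. \<Sum>a\<in>A. P t a * C a (bs t))"
  have wpos: "w t a > 0" for t a by (simp add: w_def ew_weight_def)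
  have Wpos: "W t > 0" for t unfolding W_def using fin ne wpos by (intro sum_pos) auto
  have Pdef: "P t a = w t a / W t" for t a by (simp add: P_def ew_prob_def w_def W_def)
  have wS: "w (Suc t) a = w t a * exp (- \<eta> * C a (bs t))" if "t \<ge> 1" for t a
    using that by (simp add: w_def ew_weight_def atLeastLessThanSuc exp_add[symmetric] algebra_simps)
  have WS: "W (Suc t) = W t * (\<Sum>a\<in>A. P t a * exp (- \<eta> * C a (bs t)))" if "t \<ge> 1" for t
  proof -
    have "W (Suc t) = (\<Sum>a\<in>A. W t * (P t a * exp (- \<eta> * C a (bs t))))"
      unfolding W_def using that Wpos[of t] by (intro sum.cong) (auto simp: wS Pdef W_def)
    then show ?thesis by (simp add: sum_distrib_left)
  qed
  have P0: "P t a \<ge> 0" for t a using wpos Wpos Pdef by (simp add: less_imp_le)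
  have P1: "sum (P t) A = 1" for t using Wpos[of t] by (simp add: Pdef W_def sum_divide_distrib[symmetric])
  have ind: "n \<le> T \<Longrightarrow> W (Suc n) \<le> card A * exp (\<Sum>t\<in>{1..n}. - \<eta> * E t + \<eta>\<^sup>2 * R\<^sup>2 / 8)" for n
  proof (induction n)
    case 0
    then show ?case by (simp add: W_def w_def ew_weight_def)
  next
    case (Suc n)
    have st: "(\<Sum>a\<in>A. P (Suc n) a * exp (- \<eta> * C a (bs (Suc n)))) \<le> exp (- \<eta> * E (Suc n) + \<eta>\<^sup>2 * R\<^sup>2 / 8)"
      unfolding E_def
      by (rule hoeff_fin[OF fin]) (use P0 P1 cb Suc.prems eta in auto)
    have "W (Suc (Suc n)) = W (Suc n) * (\<Sum>a\<in>A. P (Suc n) a * exp (- \<eta> * C a (bs (Suc n))))"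
      by (rule WS) simp
    also have "\<dots> \<le> W (Suc n) * exp (- \<eta> * E (Suc n) + \<eta>\<^sup>2 * R\<^sup>2 / 8)"
      using st Wpos[of "Suc n"] by simp
    also have "\<dots> \<le> card A * exp (\<Sum>t\<in>{1..n}. - \<eta> * E t + \<eta>\<^sup>2 * R\<^sup>2 / 8) * exp (- \<eta> * E (Suc n) + \<eta>\<^sup>2 * R\<^sup>2 / 8)"
      using Suc by (intro mult_right_mono) auto
    also have "\<dots> = card A * exp (\<Sum>t\<in>{1..Suc n}. - \<eta> * E t + \<eta>\<^sup>2 * R\<^sup>2 / 8)"
      by (simp add: exp_add[symmetric] add.commute)
    finally show ?case .
  qed
  define L where "L = (\<lambda>a. \<Sum>t\<in>{1..T}. C a (bs t))"
  define m where "m = Min (L ` A)"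
  have "m \<in> L ` A" unfolding m_def using fin ne by (intro Min_in) auto
  then obtain a0 where a0: "a0 \<in> A" "L a0 = m" by auto
  have "w (Suc T) a0 \<le> W (Suc T)" unfolding W_def using fin a0 wpos
    by (intro member_le_sum) (auto simp: less_imp_le)
  also have "\<dots> \<le> card A * exp (\<Sum>t\<in>{1..T}. - \<eta> * E t + \<eta>\<^sup>2 * R\<^sup>2 / 8)" by (rule ind) simp
  also have "(\<Sum>t\<in>{1..T}. - \<eta> * E t + \<eta>\<^sup>2 * R\<^sup>2 / 8) = - \<eta> * (\<Sum>t\<in>{1..T}. E t) + T * (\<eta>\<^sup>2 * R\<^sup>2 / 8)"
    by (simp add: sum.distrib sum_distrib_left[symmetric] sum_negf sum_subtractf)
  finally have X: "exp (- \<eta> * m) \<le> card A * exp (- \<eta> * (\<Sum>t\<in>{1..T}. E t) + T * (\<eta>\<^sup>2 * R\<^sup>2 / 8))"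
    using a0 by (simp add: w_def ew_weight_def L_def atLeastLessThanSuc_atLeastAtMost)
  have cA: "card A > 0" using fin ne by (simp add: card_gt_0_iff)
  have "- \<eta> * m = ln (exp (- \<eta> * m))" by simp
  also have "\<dots> \<le> ln (card A * exp (- \<eta> * (\<Sum>t\<in>{1..T}. E t) + T * (\<eta>\<^sup>2 * R\<^sup>2 / 8)))"
    using X cA by (subst ln_le_cancel_iff) auto
  also have "\<dots> = ln (card A) - \<eta> * (\<Sum>t\<in>{1..T}. E t) + T * (\<eta>\<^sup>2 * R\<^sup>2 / 8)"
    using cA by (simp add: ln_mult)
  finally have "\<eta> * ((\<Sum>t\<in>{1..T}. E t) - m) \<le> ln (card A) + T * (\<eta>\<^sup>2 * R\<^sup>2 / 8)"
    by (simp add: algebra_simps)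
  also have "ln (card A) + T * (\<eta>\<^sup>2 * R\<^sup>2 / 8) = \<eta> * (ln (card A) / \<eta> + \<eta> * T * R\<^sup>2 / 8)"
    using eta by (simp add: field_simps power2_eq_square)
  finally have "\<eta> * ((\<Sum>t\<in>{1..T}. E t) - m) \<le> \<eta> * (ln (card A) / \<eta> + \<eta> * T * R\<^sup>2 / 8)" .
  then have "(\<Sum>t\<in>{1..T}. E t) - m \<le> ln (card A) / \<eta> + \<eta> * T * R\<^sup>2 / 8"
    using eta by simp
  then show ?thesis by (simp add: E_def P_def m_def L_def)
qed

theorem theorem1:
  fixes N :: nat and Alev :: "nat \<Rightarrow> real set"
    and fR fV :: "nat \<Rightarrow> real \<Rightarrow> real" and fT :: "nat \<Rightarrow> nat \<Rightarrow> real \<Rightarrow> real"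
    and tr :: "vec \<Rightarrow> vec \<Rightarrow> transfer" and B :: "vec set"
    and \<Theta> :: real and T :: nat and bs :: "nat \<Rightarrow> vec" and \<delta> :: real
  assumes "N \<ge> 1"
    and "\<And>n. n < N \<Longrightarrow> finite (Alev n)" and "\<And>n. n < N \<Longrightarrow> Alev n \<noteq> {}"
    and "\<And>n x. fR n x > 0" and "\<And>n x. fV n x > 0" and "\<And>n m x. fT n m x > 0"
    and "optimal_transfer N fV fT (res_set N Alev) B tr"
    and "\<Theta> > 0"
    and "\<And>a b. a \<in> res_set N Alev \<Longrightarrow> b \<in> B \<Longrightarrow>
           \<bar>cost_R N fR a\<bar> \<le> \<Theta> \<and> \<bar>cost_T N fT tr a b\<bar> \<le> \<Theta> \<and> \<bar>cost_V N fV tr a b\<bar> \<le> \<Theta>"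
    and "T > 0"
    and "\<And>t. t \<in> {1..T} \<Longrightarrow> bs t \<in> B"
    and "0 < \<delta>" and "\<delta> < 1"
  shows "let AA = res_set N Alev;
             C = (\<lambda>a b. cost_R N fR a + cost_V N fV tr a b + cost_T N fT tr a b);
             \<eta> = sqrt (ln (real (card AA)) / real T)
         in ew_event_prob AA \<eta> C bs T
              (\<lambda>\<omega>. regret AA C bs T \<omega> \<le>
                 (9 * \<Theta>\<^sup>2 / 8 + 1) * sqrt (real T * ln (real (card AA)))
                 + 3 * \<Theta> * sqrt (1/2 * ln (1 / \<delta>) * real T))
            \<ge> 1 - \<delta>"
proof -
  define AA where "AA = res_set N Alev"
  define C where "C = (\<lambda>a b. cost_R N fR a + cost_V N fV tr a b + cost_T N fT tr a b)"
  define K where "K = card AA"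
  define \<eta> where "\<eta> = sqrt (ln (real K) / real T)"
  define bound where "bound = (9 * \<Theta>\<^sup>2 / 8 + 1) * sqrt (real T * ln (real K))"
  define \<epsilon> where "\<epsilon> = 3 * \<Theta> * sqrt (1/2 * ln (1 / \<delta>) * real T)"
  have finAA: "finite AA" unfolding AA_def res_set_def using assms(2) by (intro finite_PiE) auto
  have neAA: "AA \<noteq> {}" unfolding AA_def res_set_def using assms(3) by (simp add: PiE_eq_empty_iff)
  have Cb: "0 \<le> C a (bs t) \<and> C a (bs t) \<le> 3 * \<Theta>" if t: "t \<in> {1..T}" and a: "a \<in> AA" for t a
  proof -
    have "cost_R N fR a \<ge> 0" unfolding cost_R_def by (intro sum_nonneg) (simp add: less_imp_le assms(4))
    moreover have "cost_V N fV tr a (bs t) \<ge> 0" unfolding cost_V_def cost_V_of_def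
      by (intro sum_nonneg) (simp add: less_imp_le assms(5))
    moreover have "cost_T N fT tr a (bs t) \<ge> 0" unfolding cost_T_def cost_T_of_def
      by (intro sum_nonneg) (simp add: less_imp_le assms(6))
    moreover have "\<bar>cost_R N fR a\<bar> \<le> \<Theta> \<and> \<bar>cost_T N fT tr a (bs t)\<bar> \<le> \<Theta> \<and> \<bar>cost_V N fV tr a (bs t)\<bar> \<le> \<Theta>"
      using assms(9)[OF _ assms(11)[OF t]] a AA_def by simp
    ultimately show ?thesis unfolding C_def by (simp add: abs_le_iff)
  qed
  have bound0: "bound \<ge> 0" unfolding bound_def using finAA neAA
    by (intro mult_nonneg_nonneg) (auto simp: K_def card_gt_0_iff Suc_le_eq)
  have det: "(\<Sum>t\<in>{1..T}. \<Sum>a\<in>AA. ew_prob AA \<eta> C bs t a * C a (bs t))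
           - Min ((\<lambda>a. \<Sum>t\<in>{1..T}. C a (bs t)) ` AA) \<le> bound"
  proof (cases "K = 1")
    case True
    then obtain a0 where AA1: "AA = {a0}" unfolding K_def by (auto simp: card_1_singleton_iff)
    have "ew_prob AA \<eta> C bs t a0 = 1" for t
      by (simp add: ew_prob_def AA1 ew_weight_def)
    then show ?thesis using bound0 by (simp add: AA1)
  next
    case False
    have "card AA > 0" using finAA neAA by (simp add: card_gt_0_iff)
    with False have K2: "K \<ge> 2" unfolding K_def by linarith
    have lnK: "ln (real K) > 0" using K2 by simp
    have Tp: "real T > 0" using assms(10) by simp
    have etap: "\<eta> > 0" unfolding \<eta>_def using lnK Tp by simp
    define s where "s = sqrt (real T * ln (real K))"
    have "\<eta> * s = sqrt (ln (real K) / real T * (real T * ln (real K)))"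
      by (simp add: \<eta>_def s_def real_sqrt_mult[symmetric])
    also have "\<dots> = sqrt ((ln (real K))\<^sup>2)" using Tp by (simp add: power2_eq_square field_simps)
    also have "\<dots> = ln (real K)" using lnK by simp
    finally have es: "\<eta> * s = ln (real K)" .
    have "\<eta> * T = sqrt (ln (real K) / real T) * sqrt ((real T)\<^sup>2)"
      using Tp by (simp add: \<eta>_def)
    also have "\<dots> = sqrt (ln (real K) / real T * (real T)\<^sup>2)"
      by (rule real_sqrt_mult[symmetric])
    also have "\<dots> = s" using Tp by (simp add: s_def power2_eq_square field_simps)
    finally have eT: "\<eta> * T = s" .
    have "(\<Sum>t\<in>{1..T}. \<Sum>a\<in>AA. ew_prob AA \<eta> C bs t a * C a (bs t))
           - Min ((\<lambda>a. \<Sum>t\<in>{1..T}. C a (bs t)) ` AA) \<le> ln (card AA) / \<eta> + \<eta> * T * (3 * \<Theta>)\<^sup>2 / 8"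
      by (rule hedge[where C=C and bs=bs, OF finAA neAA Cb etap])
    also have "ln (card AA) / \<eta> = s" using es etap K_def by (simp add: field_simps)
    also have "\<eta> * T * (3 * \<Theta>)\<^sup>2 / 8 = s * (9 * \<Theta>\<^sup>2 / 8)" using eT by (simp add: power2_eq_square)
    finally show ?thesis by (simp add: bound_def s_def algebra_simps)
  qed
  define f where "f = (\<lambda>t a. if a \<in> AA then ew_prob AA \<eta> C bs t a else 0)"
  have Wp: "(\<Sum>a'\<in>AA. ew_weight \<eta> C bs t a') > 0" for t
    using finAA neAA by (intro sum_pos) (auto simp: ew_weight_def)
  have f0: "\<And>x. 0 \<le> f t x" for t
    using Wp[of t] by (simp add: f_def ew_prob_def ew_weight_def less_imp_le)
  have fsum: "(\<Sum>a\<in>AA. f t a) = 1" for t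
    using Wp[of t] by (simp add: f_def ew_prob_def sum_divide_distrib[symmetric])
  have intf: "(\<integral>\<^sup>+x. ennreal (f t x) \<partial>count_space UNIV) = 1" for t
  proof -
    have "(\<integral>\<^sup>+x. ennreal (f t x) \<partial>count_space UNIV) = (\<Sum>x\<in>AA. ennreal (f t x))"
      by (rule nn_integral_count_space'[OF finAA]) (auto simp: f_def)
    also have "\<dots> = ennreal (\<Sum>x\<in>AA. f t x)" using f0 by (simp add: sum_ennreal)
    finally show ?thesis using fsum by simp
  qed
  define p where "p = (\<lambda>t. embed_pmf (f t))"
  have pmf_p: "pmf (p t) a = f t a" for t a
    unfolding p_def by (rule pmf_embed_pmf[OF f0 intf])
  have set_p: "set_pmf (p t) \<subseteq> AA" for t
    unfolding p_def by (subst set_embed_pmf[OF f0 intf]) (auto simp: f_def)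
  define \<Omega> where "\<Omega> = Pi_pmf {1..T} undefined p"
  define E where "E = (\<lambda>\<omega>. regret AA C bs T \<omega> \<le> bound + \<epsilon>)"
  define S where "S = {\<omega>\<in>PiE {1..T} (\<lambda>_. AA). E \<omega>}"
  have setO: "set_pmf \<Omega> \<subseteq> PiE {1..T} (\<lambda>_. AA)"
  proof -
    have "set_pmf \<Omega> \<subseteq> PiE_dflt {1..T} undefined (set_pmf \<circ> p)"
      unfolding \<Omega>_def by (rule set_Pi_pmf_subset') simp
    also have "\<dots> \<subseteq> PiE {1..T} (\<lambda>_. AA)"
      using set_p by (auto simp: PiE_dflt_def PiE_def Pi_def extensional_def)
    finally show ?thesis .
  qed
  have finS: "finite S" unfolding S_def 
    by (rule finite_subset[of _ "PiE {1..T} (\<lambda>_. AA)"]) (use finAA in \<open>auto intro: finite_PiE\<close>)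
  have "ew_event_prob AA \<eta> C bs T E = (\<Sum>\<omega>\<in>S. pmf \<Omega> \<omega>)"
    unfolding ew_event_prob_def S_def[symmetric]
  proof (intro sum.cong refl)
    fix \<omega> assume "\<omega> \<in> S"
    then have w: "\<omega> \<in> PiE {1..T} (\<lambda>_. AA)" by (simp add: S_def)
    then have "pmf \<Omega> \<omega> = (\<Prod>t\<in>{1..T}. pmf (p t) (\<omega> t))"
      unfolding \<Omega>_def by (subst pmf_Pi) (auto simp: PiE_def extensional_def)
    also have "\<dots> = (\<Prod>t\<in>{1..T}. ew_prob AA \<eta> C bs t (\<omega> t))"
      using w by (intro prod.cong refl) (auto simp: pmf_p f_def)
    finally show "(\<Prod>t\<in>{1..T}. ew_prob AA \<eta> C bs t (\<omega> t)) = pmf \<Omega> \<omega>" by simp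
  qed
  also have "\<dots> = measure_pmf.prob \<Omega> S" by (rule measure_measure_pmf_finite[OF finS, symmetric])
  also have "\<dots> = measure_pmf.prob \<Omega> {\<omega>. E \<omega>}"
  proof -
    have "S \<inter> set_pmf \<Omega> = {\<omega>. E \<omega>} \<inter> set_pmf \<Omega>" using setO by (auto simp: S_def)
    then show ?thesis by (metis measure_Int_set_pmf)
  qed
  finally have evp: "ew_event_prob AA \<eta> C bs T E = measure_pmf.prob \<Omega> {\<omega>. E \<omega>}" .
  define X where "X = (\<lambda>t (\<omega>::nat \<Rightarrow> vec). C (\<omega> t) (bs t))"
  define \<mu> where "\<mu> = (\<Sum>t\<in>{1..T}. measure_pmf.expectation \<Omega> (X t))"
  interpret H: Hoeffding_ineq "measure_pmf \<Omega>" "{1..T}" X "\<lambda>_. 0" "\<lambda>_. 3 * \<Theta>" \<mu>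
  proof unfold_locales
    show "prob_space.indep_vars (measure_pmf \<Omega>) (\<lambda>_. borel) X {1..T}"
      unfolding \<Omega>_def X_def
      by (intro prob_space.indep_vars_compose2[OF _ indep_vars_Pi_pmf, where Y = "\<lambda>t a. C a (bs t)"])
         (auto simp: measure_pmf.prob_space_axioms)
  next
    fix t assume t: "t \<in> {1..T}"
    show "AE x in measure_pmf \<Omega>. X t x \<in> {0..3 * \<Theta>}"
    proof (rule AE_pmfI)
      fix \<omega> assume "\<omega> \<in> set_pmf \<Omega>"
      then have "\<omega> t \<in> AA" using setO t by (auto simp: PiE_def Pi_def)
      then show "X t \<omega> \<in> {0..3 * \<Theta>}" using Cb[OF t] by (simp add: X_def)
    qed
  qed (auto simp: \<mu>_def)
  have muv: "\<mu> = (\<Sum>t\<in>{1..T}. \<Sum>a\<in>AA. ew_prob AA \<eta> C bs t a * C a (bs t))"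
    unfolding \<mu>_def
  proof (intro sum.cong refl)
    fix t assume t: "t \<in> {1..T}"
    have "measure_pmf.expectation \<Omega> (X t) = measure_pmf.expectation (map_pmf (\<lambda>\<omega>. \<omega> t) \<Omega>) (\<lambda>a. C a (bs t))"
      by (simp add: X_def)
    also have "map_pmf (\<lambda>\<omega>. \<omega> t) \<Omega> = p t" unfolding \<Omega>_def using t by (subst Pi_pmf_component) auto
    also have "measure_pmf.expectation (p t) (\<lambda>a. C a (bs t)) = (\<Sum>a\<in>AA. pmf (p t) a *\<^sub>R C a (bs t))"
      by (rule integral_measure_pmf[OF finAA]) (use set_p in auto)
    also have "\<dots> = (\<Sum>a\<in>AA. ew_prob AA \<eta> C bs t a * C a (bs t))"
      by (intro sum.cong refl) (simp add: pmf_p f_def)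
    finally show "measure_pmf.expectation \<Omega> (X t) = (\<Sum>a\<in>AA. ew_prob AA \<eta> C bs t a * C a (bs t))" .
  qed
  have lnd: "ln (1 / \<delta>) > 0" using assms(12,13) by simp
  have eps0: "\<epsilon> \<ge> 0" unfolding \<epsilon>_def using assms(8) lnd by simp
  have pos: "(\<Sum>t\<in>{1..T}. (3 * \<Theta> - 0)\<^sup>2) > 0" using assms(8,10) by simp
  define bad where "bad = {x \<in> space (measure_pmf \<Omega>). (\<Sum>i\<in>{1..T}. X i x) \<ge> \<mu> + \<epsilon>}"
  have "measure_pmf.prob \<Omega> bad \<le> exp (-2 * \<epsilon>\<^sup>2 / (\<Sum>t\<in>{1..T}. (3 * \<Theta> - 0)\<^sup>2))"
    unfolding bad_def by (rule H.Hoeffding_ineq_ge[OF eps0 pos])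
  also have "-2 * \<epsilon>\<^sup>2 / (\<Sum>t\<in>{1..T}. (3 * \<Theta> - 0)\<^sup>2) = ln \<delta>"
  proof -
    have "\<epsilon>\<^sup>2 = (3 * \<Theta>)\<^sup>2 * (1/2 * ln (1 / \<delta>) * real T)"
      unfolding \<epsilon>_def using lnd by (simp add: power_mult_distrib)
    moreover have "ln (1 / \<delta>) = - ln \<delta>" using assms(12) by (simp add: ln_div)
    ultimately show ?thesis using assms(8,10) by (simp add: field_simps)
  qed
  also have "exp (ln \<delta>) = \<delta>" using assms(12) by simp
  finally have pbad: "measure_pmf.prob \<Omega> bad \<le> \<delta>" .
  have sub: "space (measure_pmf \<Omega>) - bad \<subseteq> {\<omega>. E \<omega>}"
  proof
    fix \<omega> assume "\<omega> \<in> space (measure_pmf \<Omega>) - bad"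
    then have lt: "(\<Sum>i\<in>{1..T}. X i \<omega>) < \<mu> + \<epsilon>" by (auto simp: bad_def)
    have "regret AA C bs T \<omega> = (\<Sum>i\<in>{1..T}. X i \<omega>) - Min ((\<lambda>a. \<Sum>t\<in>{1..T}. C a (bs t)) ` AA)"
      by (simp add: regret_def X_def)
    then have "regret AA C bs T \<omega> \<le> bound + \<epsilon>" using lt det muv by linarith
    then show "\<omega> \<in> {\<omega>. E \<omega>}" by (simp add: E_def)
  qed
  have "1 - \<delta> \<le> 1 - measure_pmf.prob \<Omega> bad" using pbad by simp
  also have "\<dots> = measure_pmf.prob \<Omega> (space (measure_pmf \<Omega>) - bad)"
    by (rule measure_pmf.prob_compl[symmetric]) simp
  also have "\<dots> \<le> measure_pmf.prob \<Omega> {\<omega>. E \<omega>}"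
    using sub by (intro measure_pmf.finite_measure_mono) auto
  also have "\<dots> = ew_event_prob AA \<eta> C bs T E" using evp by simp
  finally have main: "ew_event_prob AA \<eta> C bs T E \<ge> 1 - \<delta>" .
  show ?thesis using main
    unfolding Let_def E_def AA_def[symmetric] C_def[symmetric] K_def[symmetric] \<eta>_def[symmetric]
      bound_def[symmetric] \<epsilon>_def[symmetric] .
qed

end
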